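(* Let $(x_t^{**},y_t^{**})$, with $y_t^{**}=(\gamma^{**}_{1t},\dots,\gamma^{**}_{It})$, be a global minimax point on $\mathcal{X}\times\mathcal{Y}$ of \[ (x,y)\mapsto\sum_{n<t}\Big[L_n(x,y)+\frac{\lambda}{n^{1/9}}\sum_{i=1}^I\log(\gamma_i+1)\Big], \] let $(x_t^*,y_t^* )$ be a global minimax point on $\mathcal{X}\times\mathcal{Y}$ of $\sum_{n<t}L_n(x,y)$, and let $y_t^{\ddagger}=(\gamma^{\ddagger}_{1t},\dots,\gamma^{\ddagger}_{It})\in\arg\max_{y\in\mathcal{Y}}\sum_{n<t}\big[L_n(x_t^*,y)+\frac{\lambda}{n^{1/9}}\sum_{i=1}^I\log(\gamma_i+1)\big]$. Then \[ \sum_{n<t}\Big[L_n(x_t^{**},y_t^{**})+\frac{\lambda}{n^{1/9}}\sum_{i=1}^I\log(\gamma^{**}_{it}+1)\Big]\ge\min_{x\in\mathcal{X}}\max_{y\in\mathcal{Y}}\sum_{n<t}L_n(x,y) \] and \[ \sum_{n<t}\Big[L_n(x_t^{**},y_t^{**})-\frac{\lambda}{n^{1/9}}\sum_{i=1}^I\log(\gamma^{\ddagger}_{it}+1)\Big]\le\min_{x\in\mathcal{X}}\max_{y\in\mathcal{Y}}\sum_{n<t}L_n(x,y). \]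
   Context: Let $\mathcal{X}\subseteq\mathbb{R}^d$ be compact. For $t=1,\dots,T$, $f_t,c_{it}:\mathcal{X}\to\mathbb{R}$ ($i=1,\dots,I$) are $G_0$-Lipschitz w.r.t. $\ell_1$, $b_i\ge0$, and for $y=(\gamma_1,\dots,\gamma_I)$, $L_t(x,y)=f_t(x)+\sum_i\gamma_i[c_{it}(x)-b_i]$. Fix constants $\lambda>0$, $y_{\max}>0$ and $\mathcal{Y}=[0,y_{\max}]^I$. A global minimax point of $h$ on $\mathcal{X}\times\mathcal{Y}$ is $(x^*,y^* )$ with $h(x^*,y)\le h(x^*,y^* )\le\max_{y'\in\mathcal{Y}}h(x,y')$ for all $x\in\mathcal{X},y\in\mathcal{Y}$. *)

theory Defs
  imports "HOL-Analysis.Analysis"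
begin

text \<open>Points of R^d are vectors of type real^'d; dual variables y = (gamma_1..gamma_I)
  are vectors of type real^'i (the constraint index set is the finite type 'i).\<close>

definition l1_dist :: "real^'d \<Rightarrow> real^'d \<Rightarrow> real" where
  "l1_dist x x' = (\<Sum>j\<in>UNIV. \<bar>x$j - x'$j\<bar>)"

definition l1_lipschitz_on :: "(real^'d) set \<Rightarrow> real \<Rightarrow> (real^'d \<Rightarrow> real) \<Rightarrow> bool" where
  "l1_lipschitz_on X G g \<longleftrightarrow> (\<forall>x\<in>X. \<forall>x'\<in>X. \<bar>g x - g x'\<bar> \<le> G * l1_dist x x')"

definition box_Y :: "real \<Rightarrow> (real^'i) set" where
  "box_Y ymax = {y. \<forall>i. 0 \<le> y$i \<and> y$i \<le> ymax}"

definition lagr :: "(nat \<Rightarrow> real^'d \<Rightarrow> real) \<Rightarrow> (nat \<Rightarrow> 'i::finite \<Rightarrow> real^'d \<Rightarrow> real)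
    \<Rightarrow> ('i \<Rightarrow> real) \<Rightarrow> nat \<Rightarrow> real^'d \<Rightarrow> real^'i \<Rightarrow> real" where
  "lagr f c b n x y = f n x + (\<Sum>i\<in>UNIV. y$i * (c n i x - b i))"

definition global_minimax :: "('a \<Rightarrow> 'b \<Rightarrow> real) \<Rightarrow> 'a set \<Rightarrow> 'b set \<Rightarrow> 'a \<Rightarrow> 'b \<Rightarrow> bool" where
  "global_minimax h X Y xs ys \<longleftrightarrow> xs \<in> X \<and> ys \<in> Y \<and>
     (\<forall>x\<in>X. \<forall>y\<in>Y. h xs y \<le> h xs ys \<and> h xs ys \<le> (SUP y'\<in>Y. h x y'))"

end

theory Submission
  imports Defs
begin

theorem lemma9:
  fixes X :: "(real^'d) set"
    and f :: "nat \<Rightarrow> real^'d \<Rightarrow> real"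
    and c :: "nat \<Rightarrow> 'i::finite \<Rightarrow> real^'d \<Rightarrow> real"
    and b :: "'i \<Rightarrow> real"
    and G0 lam ymax :: real and T t :: nat
    and xss xs :: "real^'d" and yss ys ydd :: "real^'i"
  assumes "compact X"
    and "\<And>n. n \<in> {1..T} \<Longrightarrow> l1_lipschitz_on X G0 (f n)"
    and "\<And>n i. n \<in> {1..T} \<Longrightarrow> l1_lipschitz_on X G0 (c n i)"
    and "\<And>i. b i \<ge> 0"
    and "lam > 0" and "ymax > 0"
    and "1 \<le> t" and "t \<le> T"
    and "global_minimax
           (\<lambda>x y. \<Sum>n\<in>{1..<t}. lagr f c b n x y
              + lam / (real n powr (1/9)) * (\<Sum>i\<in>UNIV. ln (y$i + 1)))
           X (box_Y ymax) xss yss"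
    and "global_minimax (\<lambda>x y. \<Sum>n\<in>{1..<t}. lagr f c b n x y) X (box_Y ymax) xs ys"
    and "ydd \<in> box_Y ymax"
    and "\<forall>y\<in>box_Y ymax.
           (\<Sum>n\<in>{1..<t}. lagr f c b n xs y + lam / (real n powr (1/9)) * (\<Sum>i\<in>UNIV. ln (y$i + 1)))
           \<le> (\<Sum>n\<in>{1..<t}. lagr f c b n xs ydd + lam / (real n powr (1/9)) * (\<Sum>i\<in>UNIV. ln (ydd$i + 1)))"
  shows "((\<Sum>n\<in>{1..<t}. lagr f c b n xss yss + lam / (real n powr (1/9)) * (\<Sum>i\<in>UNIV. ln (yss$i + 1)))
           \<ge> (INF x\<in>X. SUP y\<in>box_Y ymax. \<Sum>n\<in>{1..<t}. lagr f c b n x y))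
    \<and> ((\<Sum>n\<in>{1..<t}. lagr f c b n xss yss - lam / (real n powr (1/9)) * (\<Sum>i\<in>UNIV. ln (ydd$i + 1)))
           \<le> (INF x\<in>X. SUP y\<in>box_Y ymax. \<Sum>n\<in>{1..<t}. lagr f c b n x y))"
proof -
  let ?Y = "box_Y ymax :: (real^'i) set"
  define F where "F x y = (\<Sum>n\<in>{1..<t}. lagr f c b n x y)" for x y
  define a where "a n = lam / (real n powr (1/9))" for n :: nat
  define l where "l y = (\<Sum>i\<in>UNIV. ln ((y::real^'i)$i + 1))" for y
  define H where "H x y = (\<Sum>n\<in>{1..<t}. lagr f c b n x y + a n * l y)" for x y
  have Hs: "H x y = F x y + (\<Sum>n\<in>{1..<t}. a n) * l y" for x y
    unfolding H_def F_def by (simp add: sum.distrib sum_distrib_right)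
  have A0: "(\<Sum>n\<in>{1..<t}. a n) \<ge> 0"
    unfolding a_def using assms(5) by (intro sum_nonneg) simp
  have l0: "l y \<ge> 0" if "y \<in> ?Y" for y
    unfolding l_def using that by (intro sum_nonneg) (simp add: box_Y_def)
  have HF: "H x y \<ge> F x y" if "y \<in> ?Y" for x y
    using Hs[of x y] A0 l0[OF that] by simp
  note m1 = assms(9)[unfolded global_minimax_def, folded a_def l_def, folded H_def]
  note m2 = assms(10)[unfolded global_minimax_def, folded F_def]
  have xs: "xs \<in> X" and ys: "ys \<in> ?Y" using m2 by auto
  have xss: "xss \<in> X" and yss: "yss \<in> ?Y" using m1 by auto
  have supxs: "(SUP y\<in>?Y. F xs y) = F xs ys"
    using m2 xs ys by (intro cSup_eq_maximum) auto
  have lowb: "F xs ys \<le> (SUP y\<in>?Y. F x y)" if "x \<in> X" for x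
    using m2 that ys by blast
  have V: "(INF x\<in>X. SUP y\<in>?Y. F x y) = F xs ys"
  proof (rule cInf_eq_minimum)
    show "F xs ys \<in> (\<lambda>x. SUP y\<in>?Y. F x y) ` X" using xs supxs by (metis image_eqI)
    show "\<And>z. z \<in> (\<lambda>x. SUP y\<in>?Y. F x y) ` X \<Longrightarrow> F xs ys \<le> z" using lowb by blast
  qed
  have c1: "H xss yss \<ge> F xs ys"
  proof -
    have "(SUP y\<in>?Y. F xss y) \<le> H xss yss"
    proof (rule cSUP_least)
      show "?Y \<noteq> {}" using ys by auto
      fix y assume y: "y \<in> ?Y"
      show "F xss y \<le> H xss yss" using HF[OF y, of xss] m1 y xss by fastforce
    qed
    thus ?thesis using lowb[OF xss] by linarith
  qed
  have c2: "F xss yss - (\<Sum>n\<in>{1..<t}. a n) * l ydd \<le> F xs ys"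
  proof -
    have mx: "(SUP y\<in>?Y. H xs y) = H xs ydd"
      using assms(11) assms(12)[folded a_def l_def, folded H_def]
      by (intro cSup_eq_maximum) auto
    have "H xss yss \<le> H xs ydd" using m1 xs mx by metis
    moreover have "F xs ydd \<le> F xs ys" using m2 assms(11) by blast
    moreover have "H xss yss \<ge> F xss yss + 0" using Hs[of xss yss] A0 l0[OF yss] by simp
    ultimately show ?thesis using Hs[of xs ydd] by linarith
  qed
  have e2: "(\<Sum>n\<in>{1..<t}. lagr f c b n xss yss - lam / (real n powr (1/9)) * (\<Sum>i\<in>UNIV. ln (ydd$i + 1)))
     = F xss yss - (\<Sum>n\<in>{1..<t}. a n) * l ydd"
    unfolding F_def a_def l_def by (simp add: sum_subtractf sum_distrib_right)
  show ?thesis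
  proof -
    have e1: "(\<Sum>n\<in>{1..<t}. lagr f c b n xss yss + lam / (real n powr (1/9)) * (\<Sum>i\<in>UNIV. ln (yss$i + 1)))
       = H xss yss" unfolding H_def a_def l_def by (rule refl)
    have V': "(INF x\<in>X. SUP y\<in>box_Y ymax. \<Sum>n\<in>{1..<t}. lagr f c b n x y) = F xs ys"
      using V unfolding F_def .
    show ?thesis unfolding e1 e2 V' using c1 c2 by simp
  qed
qed

end
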